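(* Assume $\mathbf a,\mathbf b\in\Delta^n$ with strictly positive entries, let $\eta>0$, let $X^\eta$ be the unique minimizer of $g_\eta$ over $\mathbb{R}^{n\times n}_+$, and set $\gamma=\|C\|_\infty+2\eta$. Then for all $i,j\in[n]$: $$a_ie^{-\gamma/\tau}\le\sum_{k=1}^nX^\eta_{ik}\le1-e^{-\gamma/\tau}(1-a_i),\qquad b_je^{-\gamma/\tau}\le\sum_{k=1}^nX^\eta_{kj}\le1-e^{-\gamma/\tau}(1-b_j).$$
   Context: Let $n\ge1$, $C\in\mathbb{R}^{n\times n}$ with nonnegative entries and $\|C\|_\infty=\max_{i,j}|C_{ij}|$; $\tau>0$; $\Delta^n=\{\mathbf x\in\mathbb{R}^n_+:\sum_i x_i=1\}$. For $\mathbf x\in\mathbb{R}^n_+$ and $\mathbf y$ with positive entries, $\mathbf{KL}(\mathbf x\|\mathbf y)=\sum_i x_i\log(x_i/y_i)-x_i+y_i$ (with $0\log0=0$). $\|X\|_2$ is the Frobenius norm, $\mathbf 1_n$ the all-ones vector. $g_\eta(X)=\langle C,X\rangle+\eta\|X\|_2^2+\tau\mathbf{KL}(X\mathbf 1_n\|\mathbf a)+\tau\mathbf{KL}(X^\top\mathbf 1_n\|\mathbf b)$ for $X\in\mathbb{R}^{n\times n}_+$. *)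

theory Defs
  imports "HOL-Analysis.Analysis"
begin

text \<open>Vectors in R^n are real^'n, n x n matrices are real^'n^'n (entry X$i$j),
 with 'n an arbitrary finite index type (n = CARD('n) >= 1).\<close>

definition KL :: "real^'n \<Rightarrow> real^'n \<Rightarrow> real" where
  "KL x y = (\<Sum>i\<in>UNIV. (if x$i = 0 then 0 else x$i * ln (x$i / y$i)) - x$i + y$i)"

definition row_sums :: "real^'n^'n \<Rightarrow> real^'n" where
  "row_sums X = (\<chi> i. \<Sum>k\<in>UNIV. X$i$k)"

definition col_sums :: "real^'n^'n \<Rightarrow> real^'n" where
  "col_sums X = (\<chi> j. \<Sum>k\<in>UNIV. X$k$j)"

definition frob_sq :: "real^'n^'n \<Rightarrow> real" where
  "frob_sq X = (\<Sum>i\<in>UNIV. \<Sum>j\<in>UNIV. (X$i$j)^2)"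

definition frob_inner :: "real^'n^'n \<Rightarrow> real^'n^'n \<Rightarrow> real" where
  "frob_inner C X = (\<Sum>i\<in>UNIV. \<Sum>j\<in>UNIV. C$i$j * X$i$j)"

definition max_abs :: "real^'n^'n \<Rightarrow> real" where
  "max_abs C = Max {\<bar>C$i$j\<bar> | i j. True}"

definition nonneg_mat :: "real^'n^'n \<Rightarrow> bool" where
  "nonneg_mat X \<longleftrightarrow> (\<forall>i j. X$i$j \<ge> 0)"

definition g_eta :: "real^'n^'n \<Rightarrow> real \<Rightarrow> real \<Rightarrow> real^'n \<Rightarrow> real^'n \<Rightarrow> real^'n^'n \<Rightarrow> real" where
  "g_eta C \<tau> \<eta> a b X = frob_inner C X + \<eta> * frob_sq X
     + \<tau> * KL (row_sums X) a + \<tau> * KL (col_sums X) b"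

definition prob_simplex :: "(real^'n) set" where
  "prob_simplex = {x. (\<forall>i. x$i \<ge> 0) \<and> (\<Sum>i\<in>UNIV. x$i) = 1}"

end

theory Submission
  imports Defs
begin

definition kp :: "real \<Rightarrow> real \<Rightarrow> real" where
  "kp x y = (if x = 0 then 0 else x * ln (x / y))"

definition kt :: "real \<Rightarrow> real \<Rightarrow> real" where
  "kt x y = kp x y - x + y"

lemma KL_kt: "KL x y = (\<Sum>i\<in>UNIV. kt (x$i) (y$i))"
  by (simp add: KL_def kt_def kp_def)

lemma kt_incr:
  assumes "x \<ge> 0" "t > 0" "y > 0"
  shows "kt (x+t) y - kt x y \<le> t * ln ((x+t)/y)"
proof (cases "x = 0")
  case True thus ?thesis using assms by (simp add: kt_def kp_def)
next
  case False
  hence xp: "x > 0" using assms by simp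
  have "ln ((x+t)/x) \<le> (x+t)/x - 1" using xp assms by (intro ln_le_minus_one) simp
  also have "\<dots> = t / x" using xp by (simp add: field_simps)
  finally have l1: "ln (x+t) - ln x \<le> t / x" using xp assms by (simp add: ln_div)
  hence l2: "x * (ln (x+t) - ln x) \<le> t" using xp by (simp add: field_simps)
  have "kt (x+t) y - kt x y = x * (ln (x+t) - ln x) + t * (ln (x+t) - ln y) - t"
    using xp assms by (simp add: kt_def kp_def ln_div algebra_simps)
  also have "\<dots> \<le> t * (ln (x+t) - ln y)" using l2 by simp
  also have "\<dots> = t * ln ((x+t)/y)" using xp assms by (simp add: ln_div)
  finally show ?thesis .
qed

lemma kt_scale:
  assumes "x \<ge> 0" "0 < s" "s < 1" "y > 0"
  shows "kt (s*x) y - kt x y \<le> -(1-s) * kp x y + x*(1-s)^2"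
proof (cases "x = 0")
  case True thus ?thesis using assms by (simp add: kt_def kp_def)
next
  case False
  hence xp: "x > 0" using assms by simp
  have "ln s \<le> s - 1" using assms by (intro ln_le_minus_one) simp
  hence "s * ln s \<le> s * (s - 1)" using assms by (intro mult_left_mono) auto
  hence h: "s * ln s + (1 - s) \<le> (1-s)^2" by (simp add: power2_eq_square algebra_simps)
  have h2: "x * (s * ln s + (1 - s)) \<le> x * (1-s)^2" using h xp by (intro mult_left_mono) auto
  have "kt (s*x) y - kt x y = -(1-s) * kp x y + x * (s * ln s + (1 - s))"
    using xp assms by (simp add: kt_def kp_def ln_div ln_mult algebra_simps)
  thus ?thesis using h2 by simp
qed

lemma logsum:
  fixes x y :: "real^'n"
  assumes "\<forall>i. x$i \<ge> 0" "\<forall>i. y$i > 0" "(\<Sum>i\<in>UNIV. y$i) = 1" "m = (\<Sum>i\<in>UNIV. x$i)" "m > 0"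
  shows "m * ln m \<le> (\<Sum>i\<in>UNIV. kp (x$i) (y$i))"
proof -
  have trm: "x$i * ln m + x$i - m * y$i \<le> kp (x$i) (y$i)" for i
  proof (cases "x$i = 0")
    case True thus ?thesis using assms by (simp add: kp_def less_imp_le)
  next
    case False
    hence xp: "x$i > 0" using assms by (metis less_eq_real_def)
    have yp: "y$i > 0" using assms by auto
    have "ln (m * y$i / x$i) \<le> m * y$i / x$i - 1" using xp yp assms by (intro ln_le_minus_one) simp
    hence "x$i * ln (m * y$i / x$i) \<le> x$i * (m * y$i / x$i - 1)" using xp by (intro mult_left_mono) auto
    also have "\<dots> = m * y$i - x$i" using xp by (simp add: field_simps)
    finally have "x$i * (ln m + ln (y$i) - ln (x$i)) \<le> m * y$i - x$i"
      using xp yp assms by (simp add: ln_div ln_mult)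
    thus ?thesis using xp yp False by (simp add: kp_def ln_div algebra_simps)
  qed
  have "(\<Sum>i\<in>UNIV. x$i * ln m + x$i - m * y$i) = m * ln m + m - m * 1"
    using assms by (simp add: sum.distrib sum_subtractf sum_distrib_left[symmetric] sum_distrib_right[symmetric])
  hence "m * ln m = (\<Sum>i\<in>UNIV. x$i * ln m + x$i - m * y$i)" by simp
  also have "\<dots> \<le> (\<Sum>i\<in>UNIV. kp (x$i) (y$i))" by (intro sum_mono trm)
  finally show ?thesis .
qed



lemma lim_bound:
  fixes K \<eta> \<tau> u v \<alpha> \<beta> \<gamma> :: real
  assumes H: "\<forall>t>0. 0 \<le> K + \<eta>*t + \<tau>*ln((u+t)/\<alpha>) + \<tau>*ln((v+t)/\<beta>)"
    and "v \<le> \<beta>" "v \<ge> 0" "\<beta> > 0" "\<alpha> > 0" "u \<ge> 0" "\<tau> > 0" "K \<le> \<gamma>"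
  shows "\<alpha> * exp(-\<gamma>/\<tau>) \<le> u"
proof -
  define f where "f t = \<alpha> * exp ((-K - \<eta>*t - \<tau> * ln ((\<beta>+t)/\<beta>)) / \<tau>)" for t :: real
  have ev: "eventually (\<lambda>t. f t \<le> u + t) (at_right 0)"
  proof (rule eventually_at_rightI[where b=1])
    fix t :: real assume "t \<in> {0<..<1}"
    hence t: "t > 0" by simp
    have "ln ((v+t)/\<beta>) \<le> ln ((\<beta>+t)/\<beta>)"
      using assms t by (subst ln_le_cancel_iff) (auto simp: divide_right_mono)
    hence m: "\<tau>*ln((v+t)/\<beta>) \<le> \<tau>*ln((\<beta>+t)/\<beta>)"
      using assms by (intro mult_left_mono) auto
    have "0 \<le> K + \<eta>*t + \<tau>*ln((u+t)/\<alpha>) + \<tau>*ln((v+t)/\<beta>)" using H t by blast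
    hence "0 \<le> K + \<eta>*t + \<tau>*ln((u+t)/\<alpha>) + \<tau>*ln((\<beta>+t)/\<beta>)"
      using m by linarith
    hence "(-K - \<eta>*t - \<tau> * ln ((\<beta>+t)/\<beta>)) / \<tau> \<le> ln((u+t)/\<alpha>)"
      using assms by (simp add: field_simps)
    hence "exp ((-K - \<eta>*t - \<tau> * ln ((\<beta>+t)/\<beta>)) / \<tau>) \<le> (u+t)/\<alpha>"
      using assms t by (metis exp_le_cancel_iff exp_ln add_nonneg_pos divide_pos_pos)
    thus "f t \<le> u + t" using assms unfolding f_def by (simp add: field_simps)
  qed simp
  have l1: "(f \<longlongrightarrow> \<alpha> * exp (-K/\<tau>)) (at_right 0)"
  proof -
    have "(f \<longlongrightarrow> \<alpha> * exp ((-K - \<eta>*0 - \<tau> * ln ((\<beta>+0)/\<beta>)) / \<tau>)) (at_right 0)"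
      unfolding f_def using assms by (intro tendsto_intros) auto
    thus ?thesis using assms by simp
  qed
  have l2: "((\<lambda>t. u + t) \<longlongrightarrow> u + 0) (at_right 0)" by (intro tendsto_intros)
  have "\<alpha> * exp (-K/\<tau>) \<le> u + 0"
    by (rule tendsto_le[OF _ l2 l1 ev]) simp
  moreover have "\<alpha> * exp(-\<gamma>/\<tau>) \<le> \<alpha> * exp (-K/\<tau>)"
    using assms by (auto intro!: mult_left_mono divide_right_mono)
  ultimately show ?thesis by simp
qed


lemma KL_upd:
  fixes x x' y :: "real^'n"
  assumes "\<forall>k. k \<noteq> i \<longrightarrow> x'$k = x$k"
  shows "KL x' y - KL x y = kt (x'$i) (y$i) - kt (x$i) (y$i)"
proof -
  have e: "(\<Sum>k\<in>UNIV - {i}. kt (x'$k) (y$k)) = (\<Sum>k\<in>UNIV - {i}. kt (x$k) (y$k))"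
    using assms by (intro sum.cong) auto
  show ?thesis unfolding KL_kt
    by (simp add: sum.remove[of UNIV i] e)
qed

lemma max_abs_ge: "C$i$j \<le> max_abs (C::real^'n^'n)"
proof -
  have "{\<bar>C$i$j\<bar> | i j. True} = (\<lambda>(i,j). \<bar>C$i$j\<bar>) ` UNIV" by auto
  hence fin: "finite {\<bar>C$i$j\<bar> | i j. True}" by simp
  have "\<bar>C$i$j\<bar> \<le> max_abs C" unfolding max_abs_def by (rule Max_ge[OF fin]) auto
  thus ?thesis by simp
qed

lemma sum_delta1: "(\<Sum>(l::'b::finite)\<in>UNIV. if k = i \<and> l = j then t else 0) = (if k = i then t else (0::real))"
  by (cases "k = i") (auto simp: sum.delta)

lemma sum_delta2: "(\<Sum>(k::'a::finite)\<in>UNIV. if k = i \<and> l = j then t else 0) = (if l = j then t else (0::real))"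
  by (cases "l = j") (auto simp: sum.delta)

lemma sum_delta3: "(\<Sum>(k::'a::finite)\<in>UNIV. \<Sum>(l::'b::finite)\<in>UNIV. f k l * (if k = i \<and> l = j then t else 0)) = f i j * (t::real)"
proof -
  have "(\<Sum>k\<in>UNIV. \<Sum>l\<in>UNIV. f k l * (if k = i \<and> l = j then t else 0))
     = (\<Sum>k\<in>UNIV. if k = i then f i j * t else 0)"
    by (intro sum.cong refl) (auto simp: if_distrib[of "\<lambda>x. f _ _ * x"] cong: if_cong)
  thus ?thesis by simp
qed

lemma perturb:
  fixes C X :: "real^'n^'n" and a b :: "real^'n" and \<tau> \<eta> t :: real
  assumes tau: "\<tau> > 0" and a: "\<forall>i. a$i > 0" and b: "\<forall>j. b$j > 0"
    and X_min: "nonneg_mat X" "\<forall>Y. nonneg_mat Y \<longrightarrow> g_eta C \<tau> \<eta> a b X \<le> g_eta C \<tau> \<eta> a b Y"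
    and t: "t > 0"
  shows "0 \<le> C$i$j + 2*\<eta>*X$i$j + \<eta>*t + \<tau>*ln((row_sums X$i+t)/a$i) + \<tau>*ln((col_sums X$j+t)/b$j)"
proof -
  define Y where "Y = (\<chi> k l. X$k$l + (if k = i \<and> l = j then t else 0))"
  have Yc: "Y$k$l = X$k$l + (if k = i \<and> l = j then t else 0)" for k l unfolding Y_def by simp
  have Xnn: "X$k$l \<ge> 0" for k l using X_min(1) unfolding nonneg_mat_def by auto
  have "nonneg_mat Y" unfolding nonneg_mat_def using Xnn t by (simp add: Yc)
  hence le: "g_eta C \<tau> \<eta> a b X \<le> g_eta C \<tau> \<eta> a b Y" using X_min(2) by blast
  have rY: "row_sums Y$k = row_sums X$k + (if k = i then t else 0)" for k
    unfolding row_sums_def by (simp add: Yc sum.distrib sum_delta1)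
  have cY: "col_sums Y$l = col_sums X$l + (if l = j then t else 0)" for l
    unfolding col_sums_def by (simp add: Yc sum.distrib sum_delta2)
  have fi: "frob_inner C Y = frob_inner C X + t * C$i$j"
    unfolding frob_inner_def by (simp add: Yc distrib_left sum.distrib sum_delta3)
  have fs: "frob_sq Y = frob_sq X + 2*t*X$i$j + t^2"
    proof -
    have "(X$k$l + (if k = i \<and> l = j then t else 0))^2 = (X$k$l)^2 + (2*X$k$l + t) * (if k = i \<and> l = j then t else 0)" for k l
      by (simp add: power2_eq_square algebra_simps)
    hence "frob_sq Y = frob_sq X + (2*X$i$j + t) * t"
      unfolding frob_sq_def Yc by (simp add: sum.distrib sum_delta3[of "\<lambda>k l. 2*X$k$l + t"])
    thus ?thesis by (simp add: power2_eq_square algebra_simps)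
  qed
  have r0: "row_sums X$i \<ge> 0" unfolding row_sums_def using Xnn by (simp add: sum_nonneg)
  have c0: "col_sums X$j \<ge> 0" unfolding col_sums_def using Xnn by (simp add: sum_nonneg)
  have kr: "KL (row_sums Y) a - KL (row_sums X) a \<le> t * ln ((row_sums X$i+t)/a$i)"
    using KL_upd[of i "row_sums Y" "row_sums X" a] rY kt_incr[OF r0 t, of "a$i"] a by simp
  have kc: "KL (col_sums Y) b - KL (col_sums X) b \<le> t * ln ((col_sums X$j+t)/b$j)"
    using KL_upd[of j "col_sums Y" "col_sums X" b] cY kt_incr[OF c0 t, of "b$j"] b by simp
  have "g_eta C \<tau> \<eta> a b Y - g_eta C \<tau> \<eta> a b X
      = t * C$i$j + \<eta>*(2*t*X$i$j + t^2) + \<tau> * (KL (row_sums Y) a - KL (row_sums X) a)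
        + \<tau> * (KL (col_sums Y) b - KL (col_sums X) b)"
    unfolding g_eta_def fi fs by (simp add: algebra_simps)
  also have "\<dots> \<le> t * C$i$j + \<eta>*(2*t*X$i$j + t^2) + \<tau> * (t * ln ((row_sums X$i+t)/a$i))
        + \<tau> * (t * ln ((col_sums X$j+t)/b$j))"
    using mult_left_mono[OF kr, of \<tau>] mult_left_mono[OF kc, of \<tau>] tau by linarith
  also have "\<dots> = t * (C$i$j + 2*\<eta>*X$i$j + \<eta>*t + \<tau>*ln((row_sums X$i+t)/a$i) + \<tau>*ln((col_sums X$j+t)/b$j))"
    by (simp add: power2_eq_square algebra_simps)
  finally have "0 \<le> t * (C$i$j + 2*\<eta>*X$i$j + \<eta>*t + \<tau>*ln((row_sums X$i+t)/a$i) + \<tau>*ln((col_sums X$j+t)/b$j))"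
    using le by linarith
  thus ?thesis using t by (simp add: zero_le_mult_iff)
qed


theorem mainTheorem11:
  fixes C X :: "real^'n^'n" and a b :: "real^'n" and \<tau> \<eta> :: real
  assumes C_nonneg: "\<forall>i j. C$i$j \<ge> 0"
    and tau: "\<tau> > 0"
    and a: "a \<in> prob_simplex" "\<forall>i. a$i > 0"
    and b: "b \<in> prob_simplex" "\<forall>j. b$j > 0"
    and eta: "\<eta> > 0"
    and X_min: "nonneg_mat X" "\<forall>Y. nonneg_mat Y \<longrightarrow> g_eta C \<tau> \<eta> a b X \<le> g_eta C \<tau> \<eta> a b Y"
  shows "\<forall>i j.
     a$i * exp (-(max_abs C + 2*\<eta>)/\<tau>) \<le> (\<Sum>k\<in>UNIV. X$i$k) \<and>
     (\<Sum>k\<in>UNIV. X$i$k) \<le> 1 - exp (-(max_abs C + 2*\<eta>)/\<tau>) * (1 - a$i) \<and>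
     b$j * exp (-(max_abs C + 2*\<eta>)/\<tau>) \<le> (\<Sum>k\<in>UNIV. X$k$j) \<and>
     (\<Sum>k\<in>UNIV. X$k$j) \<le> 1 - exp (-(max_abs C + 2*\<eta>)/\<tau>) * (1 - b$j)"
proof -
  define r where "r = row_sums X"
  define c where "c = col_sums X"
  define m where "m = (\<Sum>i\<in>UNIV. \<Sum>k\<in>UNIV. X$i$k)"
  have Xnn: "X$k$l \<ge> 0" for k l using X_min(1) unfolding nonneg_mat_def by auto
  have rc: "r$i = (\<Sum>k\<in>UNIV. X$i$k)" for i unfolding r_def row_sums_def by simp
  have cc: "c$j = (\<Sum>k\<in>UNIV. X$k$j)" for j unfolding c_def col_sums_def by simp
  have rsum: "(\<Sum>i\<in>UNIV. r$i) = m" unfolding m_def rc by simp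
  have csum: "(\<Sum>j\<in>UNIV. c$j) = m" unfolding m_def cc by (rule sum.swap)
  have r0: "r$i \<ge> 0" for i unfolding rc using Xnn by (simp add: sum_nonneg)
  have c0: "c$j \<ge> 0" for j unfolding cc using Xnn by (simp add: sum_nonneg)
  have Xle: "X$i$j \<le> m" for i j
  proof -
    have "X$i$j \<le> r$i" unfolding rc using Xnn by (intro member_le_sum) auto
    also have "\<dots> \<le> m" unfolding rsum[symmetric] using r0 by (intro member_le_sum) auto
    finally show ?thesis .
  qed
  have asum: "(\<Sum>i\<in>UNIV. a$i) = 1" using a(1) unfolding prob_simplex_def by simp
  have bsum: "(\<Sum>i\<in>UNIV. b$i) = 1" using b(1) unfolding prob_simplex_def by simp
  have m1: "m \<le> 1"
  proof (rule ccontr)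
    assume "\<not> m \<le> 1"
    hence mg: "m > 1" by simp
    hence lm: "ln m > 0" by simp
    define \<delta> where "\<delta> = min (1/2) (ln m / 2)"
    have d0: "\<delta> > 0" "\<delta> \<le> 1/2" "\<delta> < ln m" using lm unfolding \<delta>_def by auto
    define s where "s = 1 - \<delta>"
    have s0: "0 < s" "s < 1" using d0 unfolding s_def by auto
    define Y where "Y = (\<chi> i j. s * X$i$j)"
    have Yc: "Y$i$j = s * X$i$j" for i j unfolding Y_def by simp
    have "nonneg_mat Y" unfolding nonneg_mat_def Yc using Xnn s0 by simp
    hence le: "g_eta C \<tau> \<eta> a b X \<le> g_eta C \<tau> \<eta> a b Y" using X_min(2) by blast
    have rY: "row_sums Y$i = s * r$i" for i unfolding row_sums_def rc Yc by (simp add: sum_distrib_left)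
    have cY: "col_sums Y$j = s * c$j" for j unfolding col_sums_def cc Yc by (simp add: sum_distrib_left)
    have fi: "frob_inner C Y = s * frob_inner C X"
      unfolding frob_inner_def Yc by (simp add: sum_distrib_left algebra_simps)
    have fs: "frob_sq Y = s^2 * frob_sq X"
      unfolding frob_sq_def Yc by (simp add: sum_distrib_left power_mult_distrib)
    have L0: "frob_inner C X \<ge> 0" unfolding frob_inner_def using C_nonneg Xnn
      by (intro sum_nonneg) (simp add: sum_nonneg)
    have Q0: "frob_sq X \<ge> 0" unfolding frob_sq_def by (intro sum_nonneg) (simp add: sum_nonneg)
    have kgen: "KL (\<chi> i. s * x$i) y - KL x y \<le> -\<delta> * (\<Sum>i\<in>UNIV. kp (x$i) (y$i)) + \<delta>^2 * (\<Sum>i\<in>UNIV. x$i)"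
      if "\<forall>i. x$i \<ge> 0" "\<forall>i. y$i > 0" for x y :: "real^'n"
    proof -
      have "KL (\<chi> i. s * x$i) y - KL x y = (\<Sum>i\<in>UNIV. kt (s * x$i) (y$i) - kt (x$i) (y$i))"
        unfolding KL_kt by (simp add: sum_subtractf)
      also have "\<dots> \<le> (\<Sum>i\<in>UNIV. -(1-s) * kp (x$i) (y$i) + x$i*(1-s)^2)"
        using that s0 by (intro sum_mono kt_scale) auto
      also have "\<dots> = -\<delta> * (\<Sum>i\<in>UNIV. kp (x$i) (y$i)) + \<delta>^2 * (\<Sum>i\<in>UNIV. x$i)"
        unfolding s_def by (simp add: sum.distrib sum_subtractf sum_negf sum_distrib_left sum_distrib_right algebra_simps)
      finally show ?thesis .
    qed
    have rYv: "row_sums Y = (\<chi> i. s * r$i)" using rY by (simp add: vec_eq_iff)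
    have cYv: "col_sums Y = (\<chi> i. s * c$i)" using cY by (simp add: vec_eq_iff)
    have kr: "KL (row_sums Y) a - KL r a \<le> -\<delta> * (\<Sum>i\<in>UNIV. kp (r$i) (a$i)) + \<delta>^2 * m"
      using kgen[of r a] r0 a(2) rsum rYv by simp
    have kc: "KL (col_sums Y) b - KL c b \<le> -\<delta> * (\<Sum>i\<in>UNIV. kp (c$i) (b$i)) + \<delta>^2 * m"
      using kgen[of c b] c0 b(2) csum cYv by simp
    have m0: "m > 0" using mg by simp
    have Sr: "m * ln m \<le> (\<Sum>i\<in>UNIV. kp (r$i) (a$i))"
      using logsum[of r a m] r0 a(2) asum rsum m0 by simp
    have Sc: "m * ln m \<le> (\<Sum>i\<in>UNIV. kp (c$i) (b$i))"
      using logsum[of c b m] c0 b(2) bsum csum m0 by simp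
    have kr2: "KL (row_sums Y) a - KL r a \<le> -\<delta> * (m * ln m) + \<delta>^2 * m"
      using kr mult_left_mono[OF Sr, of \<delta>] d0 by linarith
    have kc2: "KL (col_sums Y) b - KL c b \<le> -\<delta> * (m * ln m) + \<delta>^2 * m"
      using kc mult_left_mono[OF Sc, of \<delta>] d0 by linarith
    have t1: "s * frob_inner C X \<le> frob_inner C X" using L0 s0 mult_right_mono[of s 1 "frob_inner C X"] by simp
    have "s^2 \<le> 1" using s0 by (simp add: power_le_one)
    hence t2: "\<eta> * (s^2 * frob_sq X) \<le> \<eta> * frob_sq X"
      using Q0 eta mult_right_mono[of "s^2" 1 "frob_sq X"] by (intro mult_left_mono) auto
    have "g_eta C \<tau> \<eta> a b Y - g_eta C \<tau> \<eta> a b X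
       = (s * frob_inner C X - frob_inner C X) + (\<eta> * (s^2 * frob_sq X) - \<eta> * frob_sq X)
         + \<tau> * (KL (row_sums Y) a - KL r a) + \<tau> * (KL (col_sums Y) b - KL c b)"
      unfolding g_eta_def fi fs r_def c_def by (simp add: algebra_simps)
    also have "\<dots> \<le> \<tau> * (-\<delta> * (m * ln m) + \<delta>^2 * m) + \<tau> * (-\<delta> * (m * ln m) + \<delta>^2 * m)"
      using t1 t2 mult_left_mono[OF kr2, of \<tau>] mult_left_mono[OF kc2, of \<tau>] tau by linarith
    also have "\<dots> = 2 * \<tau> * \<delta> * m * (\<delta> - ln m)" by (simp add: power2_eq_square algebra_simps)
    also have "\<dots> < 0" using tau d0 m0 by (simp add: mult_pos_neg)
    finally show False using le by linarith
  qed
  define e where "e = exp (-(max_abs C + 2*\<eta>)/\<tau>)"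
  have Kb: "C$i$j + 2*\<eta>*X$i$j \<le> max_abs C + 2*\<eta>" for i j
  proof -
    have "\<eta> * X$i$j \<le> \<eta> * 1" using Xle[of i j] m1 eta by (intro mult_left_mono) auto
    thus ?thesis using max_abs_ge[of C i j] by linarith
  qed
  have rlow: "a$i * e \<le> r$i" for i
  proof -
    obtain j where j: "c$j \<le> b$j"
    proof (rule ccontr)
      assume "\<not> thesis"
      hence "\<forall>j. b$j < c$j" using that by (meson not_le)
      hence "(\<Sum>j\<in>UNIV. b$j) < (\<Sum>j\<in>UNIV. c$j)" by (intro sum_strict_mono) auto
      thus False using bsum csum m1 by simp
    qed
    have "\<forall>t>0. 0 \<le> (C$i$j + 2*\<eta>*X$i$j) + \<eta>*t + \<tau>*ln((r$i+t)/a$i) + \<tau>*ln((c$j+t)/b$j)"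
      using perturb[OF tau a(2) b(2) X_min] unfolding r_def c_def by (simp add: add.assoc)
    thus ?thesis unfolding e_def
      by (rule lim_bound) (use j c0 b(2) a(2) r0 tau Kb in auto)
  qed
  have clow: "b$j * e \<le> c$j" for j
  proof -
    obtain i where i: "r$i \<le> a$i"
    proof (rule ccontr)
      assume "\<not> thesis"
      hence "\<forall>j. a$j < r$j" using that by (meson not_le)
      hence "(\<Sum>j\<in>UNIV. a$j) < (\<Sum>j\<in>UNIV. r$j)" by (intro sum_strict_mono) auto
      thus False using asum rsum m1 by simp
    qed
    have "\<forall>t>0. 0 \<le> (C$i$j + 2*\<eta>*X$i$j) + \<eta>*t + \<tau>*ln((c$j+t)/b$j) + \<tau>*ln((r$i+t)/a$i)"
      using perturb[OF tau a(2) b(2) X_min] unfolding r_def c_def by (simp add: algebra_simps)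
    thus ?thesis unfolding e_def
      by (rule lim_bound) (use i c0 b(2) a(2) r0 tau Kb in auto)
  qed
  have rup: "r$i \<le> 1 - e * (1 - a$i)" for i
  proof -
    have "m = r$i + (\<Sum>k\<in>UNIV-{i}. r$k)" using rsum by (simp add: sum.remove[of UNIV i])
    moreover have "(\<Sum>k\<in>UNIV-{i}. a$k * e) \<le> (\<Sum>k\<in>UNIV-{i}. r$k)" by (intro sum_mono rlow)
    moreover have "(\<Sum>k\<in>UNIV-{i}. a$k * e) = e * (1 - a$i)"
    proof -
      have "(\<Sum>k\<in>UNIV-{i}. a$k * e) = (\<Sum>k\<in>UNIV-{i}. a$k) * e" by (simp add: sum_distrib_right)
      moreover have "(\<Sum>k\<in>UNIV-{i}. a$k) = 1 - a$i" using asum by (simp add: sum.remove[of UNIV i])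
      ultimately show ?thesis by simp
    qed
    ultimately show ?thesis using m1 by linarith
  qed
  have cup: "c$j \<le> 1 - e * (1 - b$j)" for j
  proof -
    have "m = c$j + (\<Sum>k\<in>UNIV-{j}. c$k)" using csum by (simp add: sum.remove[of UNIV j])
    moreover have "(\<Sum>k\<in>UNIV-{j}. b$k * e) \<le> (\<Sum>k\<in>UNIV-{j}. c$k)" by (intro sum_mono clow)
    moreover have "(\<Sum>k\<in>UNIV-{j}. b$k * e) = e * (1 - b$j)"
    proof -
      have "(\<Sum>k\<in>UNIV-{j}. b$k * e) = (\<Sum>k\<in>UNIV-{j}. b$k) * e" by (simp add: sum_distrib_right)
      moreover have "(\<Sum>k\<in>UNIV-{j}. b$k) = 1 - b$j" using bsum by (simp add: sum.remove[of UNIV j])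
      ultimately show ?thesis by simp
    qed
    ultimately show ?thesis using m1 by linarith
  qed
  show ?thesis using rlow clow rup cup unfolding rc cc e_def by (simp add: mult.commute)
qed

end
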